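(* Let $X^+\subseteq\mathcal A^{\mathbb N}$ be a one-sided subshift, where $\mathcal A=\{0,1,\dots,d-1\}$. For any choice of points $a^{(n)}=a^{(n)}_0a^{(n)}_1\dots\in X^+$ ($n\ge0$), let $b^{(n)}\in\mathcal A^{\mathbb Z}$ be the bisequence $0^\infty.a^{(n)}$ (i.e. $b^{(n)}_i=a^{(n)}_i$ for $i\ge0$ and $b^{(n)}_i=0$ for $i<0$), and set $x_n(a^{(n)})=\sigma^n b^{(n)}$. Then $\tilde X$ is exactly the set of all limit points of sequences $(x_n(a^{(n)}))_{n\ge0}$ (limits of convergent subsequences), taken over all choices of $a^{(n)}\in X^+$, $n\ge0$.
   Context: $\sigma$ is the shift $(\sigma x)_i=x_{i+1}$ on $\mathcal A^{\mathbb N}$ and $\mathcal A^{\mathbb Z}$, with the product topology. A one-sided subshift is a nonempty closed $\sigma$-invariant subset of $\mathcal A^{\mathbb N}$. Its natural extension is $\tilde X=\{x\in\mathcal A^{\mathbb Z}: x_px_{p+1}\dots\in X^+ \text{ for all } p\in\mathbb Z\}$. *)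

theory Defs
  imports "HOL-Analysis.Analysis"
begin

text \<open>One-sided
sequences are functions nat => nat, two-sided ones int => nat, both carrying the
product topology (Function_Topology) over the discrete space nat.\<close>

definition shift1 :: "(nat \<Rightarrow> nat) \<Rightarrow> (nat \<Rightarrow> nat)" where
  "shift1 x = (\<lambda>i. x (Suc i))"

definition shift2 :: "(int \<Rightarrow> nat) \<Rightarrow> (int \<Rightarrow> nat)" where
  "shift2 x = (\<lambda>i. x (i + 1))"

definition one_sided_subshift :: "nat \<Rightarrow> (nat \<Rightarrow> nat) set \<Rightarrow> bool" where
  "one_sided_subshift d X \<longleftrightarrow>
     X \<noteq> {} \<and> X \<subseteq> {x. \<forall>i. x i < d} \<and> closed X \<and> shift1 ` X \<subseteq> X"

definition natural_extension :: "(nat \<Rightarrow> nat) set \<Rightarrow> (int \<Rightarrow> nat) set" where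
  "natural_extension X = {x. \<forall>p::int. (\<lambda>n::nat. x (p + int n)) \<in> X}"

definition zero_pad :: "(nat \<Rightarrow> nat) \<Rightarrow> (int \<Rightarrow> nat)" where
  "zero_pad a = (\<lambda>i. if 0 \<le> i then a (nat i) else 0)"

definition subseq_limits :: "(nat \<Rightarrow> 'a::topological_space) \<Rightarrow> 'a set" where
  "subseq_limits s = {y. \<exists>r. strict_mono r \<and> (s \<circ> r) \<longlonglongrightarrow> y}"

end

theory Submission
  imports Defs
begin

lemma tendsto_fun_iff:
  "((f :: 'b \<Rightarrow> 'i \<Rightarrow> 'a::topological_space) \<longlongrightarrow> l) F \<longleftrightarrow> (\<forall>i. ((\<lambda>c. f c i) \<longlongrightarrow> l i) F)"
  using limitin_componentwise[of "\<lambda>i. euclidean" UNIV f l F]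
  by (simp add: euclidean_product_topology)

lemma shift2_iter: "(shift2 ^^ n) z = (\<lambda>i. z (i + int n))"
  by (induction n) (auto simp: shift2_def add.assoc)

lemma shift1_iter: "(shift1 ^^ n) z = (\<lambda>i. z (i + n))"
  by (induction n) (auto simp: shift1_def)

lemma shift1_iter_in: "shift1 ` X \<subseteq> X \<Longrightarrow> x \<in> X \<Longrightarrow> (shift1 ^^ n) x \<in> X"
  by (induction n) auto

theorem proposition5p5:
  fixes d :: nat and X :: "(nat \<Rightarrow> nat) set"
  assumes "one_sided_subshift d X"
  shows "natural_extension X =
    (\<Union>a \<in> {a :: nat \<Rightarrow> nat \<Rightarrow> nat. \<forall>n. a n \<in> X}.
       subseq_limits (\<lambda>n. (shift2 ^^ n) (zero_pad (a n))))"
proof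
  have cl: "closed X" and sh: "shift1 ` X \<subseteq> X"
    using assms by (auto simp: one_sided_subshift_def)
  show "natural_extension X \<subseteq> (\<Union>a \<in> {a :: nat \<Rightarrow> nat \<Rightarrow> nat. \<forall>n. a n \<in> X}.
       subseq_limits (\<lambda>n. (shift2 ^^ n) (zero_pad (a n))))"
  proof
    fix x assume x: "x \<in> natural_extension X"
    define a where "a = (\<lambda>n::nat. \<lambda>k::nat. x (- int n + int k))"
    have aX: "\<forall>n. a n \<in> X"
    proof
      fix n
      have "(\<lambda>k::nat. x (- int n + int k)) \<in> X" using x unfolding natural_extension_def by blast
      then show "a n \<in> X" unfolding a_def .
    qed
    have "(\<lambda>n. (shift2 ^^ n) (zero_pad (a n))) \<longlonglongrightarrow> x"
      unfolding tendsto_fun_iff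
    proof
      fix i :: int
      have "eventually (\<lambda>n. (shift2 ^^ n) (zero_pad (a n)) i = x i) sequentially"
        unfolding eventually_sequentially
        by (rule exI[of _ "nat (- i)"]) (auto simp: shift2_iter zero_pad_def a_def)
      then show "((\<lambda>n. (shift2 ^^ n) (zero_pad (a n)) i) \<longlongrightarrow> x i) sequentially"
        by (simp add: tendsto_discrete)
    qed
    then have "x \<in> subseq_limits (\<lambda>n. (shift2 ^^ n) (zero_pad (a n)))"
      unfolding subseq_limits_def by (auto intro!: exI[of _ id] simp: strict_mono_def o_def)
    with aX show "x \<in> (\<Union>a \<in> {a :: nat \<Rightarrow> nat \<Rightarrow> nat. \<forall>n. a n \<in> X}.
       subseq_limits (\<lambda>n. (shift2 ^^ n) (zero_pad (a n))))" by blast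
  qed
  show "(\<Union>a \<in> {a :: nat \<Rightarrow> nat \<Rightarrow> nat. \<forall>n. a n \<in> X}.
       subseq_limits (\<lambda>n. (shift2 ^^ n) (zero_pad (a n)))) \<subseteq> natural_extension X"
  proof clarify
    fix y a assume aX: "\<forall>n. (a::nat \<Rightarrow> nat \<Rightarrow> nat) n \<in> X"
      and y: "y \<in> subseq_limits (\<lambda>n. (shift2 ^^ n) (zero_pad (a n)))"
    then obtain r where r: "strict_mono r"
      and lim: "((\<lambda>n. (shift2 ^^ n) (zero_pad (a n))) \<circ> r) \<longlonglongrightarrow> y"
      unfolding subseq_limits_def by auto
    show "y \<in> natural_extension X"
      unfolding natural_extension_def
    proof (clarify)
      fix p :: int
      define z where "z = (\<lambda>m. (shift1 ^^ nat (p + int (r m))) (a (r m)))"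
      have zX: "z m \<in> X" for m
        unfolding z_def using shift1_iter_in[OF sh] aX by blast
      have "z \<longlonglongrightarrow> (\<lambda>k. y (p + int k))"
        unfolding tendsto_fun_iff
      proof
        fix k :: nat
        have e1: "eventually (\<lambda>m. (shift2 ^^ r m) (zero_pad (a (r m))) (p + int k) = y (p + int k)) sequentially"
          using lim unfolding tendsto_fun_iff by (auto simp: tendsto_discrete o_def)
        have e2: "eventually (\<lambda>m. nat (- p) \<le> m) sequentially"
          by (auto simp: eventually_sequentially)
        have "eventually (\<lambda>m. z m k = y (p + int k)) sequentially"
          using e1 e2
        proof eventually_elim
          case (elim m)
          have "m \<le> r m" using r by (simp add: seq_suble)
          then have "0 \<le> p + int (r m)" using elim(2) by linarith
          then have "nat (p + int k + int (r m)) = k + nat (p + int (r m))" by linarith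
          then show ?case using elim(1) \<open>0 \<le> p + int (r m)\<close>
            by (simp add: z_def shift2_iter shift1_iter zero_pad_def)
        qed
        then show "((\<lambda>m. z m k) \<longlongrightarrow> y (p + int k)) sequentially"
          by (simp add: tendsto_discrete)
      qed
      then show "(\<lambda>n. y (p + int n)) \<in> X"
        by (rule closed_sequentially[OF cl zX])
    qed
  qed
qed

end
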